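(* For every integer $n\ge 0$, $$\|E_{n+1}^k\|_k^2=\|E_{-n}^k\|_k^2=n!\,\frac{\Gamma(n+2k+1)}{\Gamma(n+k+1)^2}.$$
   Context: Fix $k\ge 0$. Partial order on $\mathbb{Z}$: $j\triangleleft n$ iff either ($|j|<|n|$ and $|n|-|j|$ is a positive even integer) or ($|j|=|n|$ and $n<j$). Let $\delta_k(x)=|2\sin x|^{2k}$ and on $L^2([0,2\pi),\delta_k(x)dx)$ use $(f,g)_k=\frac{1}{2\pi}\int_0^{2\pi} f(x)\overline{g(x)}\delta_k(x)\,dx$ with norm $\|\cdot\|_k$. The non-symmetric Heckman–Opdam polynomials $E_n^k$, $n\in\mathbb{Z}$, are the functions on $\mathbb{R}$ of the form $E_n^k(x)=e^{nx}+\sum_{j\triangleleft n}c_{n,j}e^{jx}$ (finite sum) such that $(E_n^k(i\,\cdot),e^{ij\,\cdot})_k=0$ for all $j\triangleleft n$. Here $\|E_n^k\|_k$ denotes the $\|\cdot\|_k$-norm of the function $x\mapsto E_n^k(ix)$. *)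

theory Defs
  imports "HOL-Analysis.Analysis"
begin

definition ho_less :: "int \<Rightarrow> int \<Rightarrow> bool" where
  "ho_less j n \<longleftrightarrow>
     (\<bar>j\<bar> < \<bar>n\<bar> \<and> even (\<bar>n\<bar> - \<bar>j\<bar>)) \<or> (\<bar>j\<bar> = \<bar>n\<bar> \<and> n < j)"

text \<open>Weight delta_k(x) = |2 sin x|^(2k), with the convention t^0 = 1.\<close>
definition ho_weight :: "real \<Rightarrow> real \<Rightarrow> real" where
  "ho_weight k x = (if k = 0 then 1 else \<bar>2 * sin x\<bar> powr (2 * k))"

definition ho_inner :: "real \<Rightarrow> (real \<Rightarrow> complex) \<Rightarrow> (real \<Rightarrow> complex) \<Rightarrow> complex" where
  "ho_inner k f g =
     integral {0..2*pi} (\<lambda>x. f x * cnj (g x) * complex_of_real (ho_weight k x)) / (2 * pi)"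

definition ho_norm2 :: "real \<Rightarrow> (real \<Rightarrow> complex) \<Rightarrow> real" where
  "ho_norm2 k f = integral {0..2*pi} (\<lambda>x. (cmod (f x))\<^sup>2 * ho_weight k x) / (2 * pi)"

definition ho_form :: "int \<Rightarrow> (int \<Rightarrow> complex) \<Rightarrow> complex \<Rightarrow> complex" where
  "ho_form n c z = exp (of_int n * z) + (\<Sum>j\<in>{j. ho_less j n}. c j * exp (of_int j * z))"

definition ho_coeffs :: "real \<Rightarrow> int \<Rightarrow> int \<Rightarrow> complex" where
  "ho_coeffs k n = (THE c. (\<forall>j. \<not> ho_less j n \<longrightarrow> c j = 0) \<and>
      (\<forall>j. ho_less j n \<longrightarrow>
         ho_inner k (\<lambda>x. ho_form n c (\<i> * of_real x)) (\<lambda>x. exp (\<i> * of_int j * of_real x)) = 0))"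

definition HO_E :: "real \<Rightarrow> int \<Rightarrow> complex \<Rightarrow> complex" where
  "HO_E k n = ho_form n (ho_coeffs k n)"

end

theory Submission
  imports Defs "HOL-Computational_Algebra.Polynomial"
begin


definition mom :: "real \<Rightarrow> int \<Rightarrow> complex" where
  "mom k j = integral {0..2*pi} (\<lambda>x. exp (\<i> * of_int j * of_real x) * of_real (ho_weight k x))"

lemma ew_deriv:
  "((\<lambda>x::real. exp (\<i> * of_int m * of_real x)) has_vector_derivative
     (\<i> * of_int m * exp (\<i> * of_int m * of_real x))) (at x within S)"
proof -
  have "((\<lambda>z. exp (\<i> * of_int m * z)) has_field_derivative (\<i> * of_int m * exp (\<i> * of_int m * of_real x))) (at (of_real x))"
    by (auto intro!: derivative_eq_intros)
  from has_vector_derivative_real_field[OF this] show ?thesis .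
qed

lemma exp_2pi_int: "exp (\<i> * of_int m * of_real (2*pi)) = 1"
proof -
  have "exp (complex_of_real (2 * real_of_int m * pi) * \<i>) = 1"
    by (rule exp_integer_2pi) simp
  then show ?thesis by (simp add: mult_ac)
qed

lemma weight_cont: "k \<ge> 0 \<Longrightarrow> continuous_on UNIV (ho_weight k)"
  unfolding ho_weight_def
  by (cases "k = 0") (auto intro!: continuous_intros continuous_on_powr')

lemma weight_nonneg: "ho_weight k x \<ge> 0"
  by (simp add: ho_weight_def)

lemma weight_alt: "k > 0 \<Longrightarrow> ho_weight k x = ((2 * sin x)^2) powr k"
proof -
  assume k: "k > 0"
  have "ho_weight k x = \<bar>2 * sin x\<bar> powr (2 * k)" using k by (simp add: ho_weight_def)
  also have "\<dots> = (\<bar>2 * sin x\<bar> powr 2) powr k"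
    by (simp only: powr_powr)
  also have "\<bar>2 * sin x\<bar> powr 2 = (2 * sin x)^2"
    by (cases "sin x = 0") (simp_all add: powr_numeral)
  finally show ?thesis .
qed

lemma weight_deriv:
  assumes k: "k \<ge> 0" and s: "sin x \<noteq> 0"
  shows "(ho_weight k has_real_derivative (2 * k * ho_weight k x * cos x / sin x)) (at x)"
proof (cases "k = 0")
  case True
  then show ?thesis by (simp add: ho_weight_def[abs_def])
next
  case False
  with k have k: "k > 0" by simp
  have eq: "ho_weight k = (\<lambda>x. ((2 * sin x)^2) powr k)"
    using weight_alt[OF k] by auto
  have pos: "0 < (2 * sin x)^2" using s by simp
  have "((\<lambda>x. ((2 * sin x)^2) powr k) has_real_derivative
     k * ((2 * sin x)^2) powr (k - real 1) * (2 * (2 * sin x) * (2 * cos x))) (at x)"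
    by (rule DERIV_fun_powr[of "\<lambda>x. (2 * sin x)^2", OF _ pos]) (auto intro!: derivative_eq_intros)
  moreover have "k * ((2 * sin x)^2) powr (k - real 1) * (2 * (2 * sin x) * (2 * cos x))
     = 2 * k * ho_weight k x * cos x / sin x"
    using s pos by (simp add: weight_alt[OF k] powr_diff field_simps power2_eq_square)
  ultimately show ?thesis by (simp add: eq)
qed

lemma key_trig:
  "complex_of_real (cos x) * (exp (\<i> * of_real (2*x)) - 1) =
   \<i> * of_real (sin x) * (exp (\<i> * of_real (2*x)) + 1)"
proof -
  have e: "exp (\<i> * of_real (2*x)) = of_real (cos (2*x)) + \<i> * of_real (sin (2*x))"
    by (simp add: complex_eq_iff Re_exp Im_exp)
  have c1: "cos (2*x) = 1 - 2 * (sin x)^2" by (simp add: cos_double_sin)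
  have c2: "cos (2*x) = 2 * (cos x)^2 - 1" by (simp add: cos_double_cos)
  have s2: "sin (2*x) = 2 * sin x * cos x" by (simp add: sin_double)
  have re: "cos x * (cos (2*x) - 1) = - (sin x * sin (2*x))"
    unfolding c1 s2 by (simp add: algebra_simps power2_eq_square)
  have im: "cos x * sin (2*x) = sin x * (cos (2*x) + 1)"
    unfolding c2 s2 by (simp add: algebra_simps power2_eq_square)
  show ?thesis unfolding e
    using re im by (simp add: complex_eq_iff algebra_simps)
qed

lemma sin_nz: "x \<in> {0<..<2*pi} - {pi} \<Longrightarrow> sin x \<noteq> 0"
proof
  assume x: "x \<in> {0<..<2*pi} - {pi}" and "sin x = 0"
  then obtain i :: int where i: "x = of_int i * pi" by (auto simp: sin_zero_iff_int2)
  from x i have "0 < of_int i * pi" "of_int i * pi < 2 * pi" "of_int i * pi \<noteq> pi" by auto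
  then have "0 < i" "i < 2" "i \<noteq> 1"
    by (auto simp: zero_less_mult_iff mult_less_cancel_right2)
  then show False by simp
qed

lemma integrable_ew:
  assumes "k \<ge> 0"
  shows "(\<lambda>x. exp (\<i> * of_int j * of_real x) * of_real (ho_weight k x)) integrable_on {a..b}"
  by (rule integrable_continuous_interval)
     (auto intro!: continuous_intros continuous_on_compose2[OF weight_cont[OF assms]])

lemma mom_has_integral:
  assumes "k \<ge> 0"
  shows "((\<lambda>x. exp (\<i> * of_int j * of_real x) * of_real (ho_weight k x)) has_integral mom k j) {0..2*pi}"
  unfolding mom_def using integrable_ew[OF assms] by (rule integrable_integral)

lemma mom_rec:
  assumes k: "k \<ge> 0"
  shows "(of_int j + 2 + 2 * of_real k) * mom k (j + 2) + (2 * of_real k - of_int j) * mom k j = 0"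
proof -
  define w where "w = ho_weight k"
  define G where "G = (\<lambda>x. of_real (w x) * (exp (\<i> * of_int (j+2) * of_real x) - exp (\<i> * of_int j * of_real x)))"
  define G' where "G' = (\<lambda>x. \<i> * (of_int j + 2 + 2 * of_real k) * (exp (\<i> * of_int (j+2) * of_real x) * of_real (w x))
      + \<i> * (2 * of_real k - of_int j) * (exp (\<i> * of_int j * of_real x) * of_real (w x)))"
  have "(G' has_integral (G (2*pi) - G 0)) {0..2*pi}"
  proof (rule fundamental_theorem_of_calculus_interior_strong[of "{pi}"])
    show "continuous_on {0..2*pi} G" unfolding G_def w_def
      by (auto intro!: continuous_intros continuous_on_compose2[OF weight_cont[OF k]])
    fix x assume x: "x \<in> {0<..<2*pi} - {pi}"
    have s: "sin x \<noteq> 0" using sin_nz[OF x] .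
    have "(G has_vector_derivative
       (of_real (w x) * (\<i> * of_int (j+2) * exp (\<i> * of_int (j+2) * of_real x) - \<i> * of_int j * exp (\<i> * of_int j * of_real x))
        + of_real (2 * k * w x * cos x / sin x) * (exp (\<i> * of_int (j+2) * of_real x) - exp (\<i> * of_int j * of_real x)))) (at x)"
      unfolding G_def
      by (intro has_vector_derivative_mult has_vector_derivative_diff ew_deriv has_vector_derivative_of_real)
         (use weight_deriv[OF k s] in \<open>simp add: w_def\<close>)
    moreover have "(of_real (w x) * (\<i> * of_int (j+2) * exp (\<i> * of_int (j+2) * of_real x) - \<i> * of_int j * exp (\<i> * of_int j * of_real x))
        + of_real (2 * k * w x * cos x / sin x) * (exp (\<i> * of_int (j+2) * of_real x) - exp (\<i> * of_int j * of_real x))) = G' x"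
    proof -
      have E2: "exp (\<i> * of_int (j+2) * of_real x) = exp (\<i> * of_int j * of_real x) * exp (\<i> * of_real (2*x))"
        by (simp add: exp_add[symmetric] algebra_simps)
      have gen: "\<And>A E Z::complex. A * (E*Z - E) = E * (A * (Z - 1))" by (simp add: algebra_simps)
      have kt: "complex_of_real (cos x) * (exp (\<i> * of_real (2*x)) - 1) =
         \<i> * of_real (sin x) * (exp (\<i> * of_real (2*x)) + 1)" by (rule key_trig)
      have "of_real (2 * k * w x * cos x / sin x) * (exp (\<i> * of_real (2*x)) - 1)
           = of_real (2 * k * w x / sin x) * (complex_of_real (cos x) * (exp (\<i> * of_real (2*x)) - 1))"
        by simp
      also have "\<dots> = \<i> * of_real (2 * k * w x) * (exp (\<i> * of_real (2*x)) + 1)"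
        unfolding kt using s by (simp add: field_simps)
      finally have kk: "of_real (2 * k * w x * cos x / sin x) * (exp (\<i> * of_real (2*x)) - 1) =
          \<i> * of_real (2 * k * w x) * (exp (\<i> * of_real (2*x)) + 1)" .
      have "of_real (2 * k * w x * cos x / sin x) * (exp (\<i> * of_int (j+2) * of_real x) - exp (\<i> * of_int j * of_real x))
          = exp (\<i> * of_int j * of_real x) * (of_real (2 * k * w x * cos x / sin x) * (exp (\<i> * of_real (2*x)) - 1))"
        unfolding E2 by (rule gen)
      also have "\<dots> = exp (\<i> * of_int j * of_real x) * (\<i> * of_real (2 * k * w x) * (exp (\<i> * of_real (2*x)) + 1))"
        unfolding kk ..
      finally have kk2: "of_real (2 * k * w x * cos x / sin x) * (exp (\<i> * of_int (j+2) * of_real x) - exp (\<i> * of_int j * of_real x))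
          = exp (\<i> * of_int j * of_real x) * (\<i> * of_real (2 * k * w x) * (exp (\<i> * of_real (2*x)) + 1))" .
      show ?thesis unfolding kk2 G'_def unfolding E2 by (simp add: algebra_simps)
    qed
    ultimately show "(G has_vector_derivative G' x) (at x)" by simp
  qed (auto)
  moreover have "G (2*pi) = G 0" unfolding G_def w_def ho_weight_def
    using exp_2pi_int[of "j+2"] exp_2pi_int[of j] by simp
  ultimately have "(G' has_integral 0) {0..2*pi}" by simp
  moreover have "(G' has_integral (\<i> * (of_int j + 2 + 2 * of_real k) * mom k (j+2) + \<i> * (2 * of_real k - of_int j) * mom k j)) {0..2*pi}"
    unfolding G'_def w_def
    by (intro has_integral_add has_integral_mult_right mom_has_integral k)
  ultimately have "\<i> * (of_int j + 2 + 2 * of_real k) * mom k (j+2) + \<i> * (2 * of_real k - of_int j) * mom k j = 0"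
    using has_integral_unique by blast
  then have "\<i> * ((of_int j + 2 + 2 * of_real k) * mom k (j+2) + (2 * of_real k - of_int j) * mom k j) = 0"
    by (simp add: algebra_simps)
  then show ?thesis by simp
qed



definition bf :: "real \<Rightarrow> real \<Rightarrow> real" where
  "bf k t = 16 powr k * (t powr (k + 1/2 - 1) * (1 - t) powr (k + 1/2 - 1))"

lemma subst_half:
  fixes g g' :: "real \<Rightarrow> real"
  assumes k: "k > 0" and ab: "a \<le> b"
    and dg: "\<And>x. x \<in> {a..b} \<Longrightarrow> (g has_real_derivative g' x) (at x)"
    and cg: "continuous_on {a..b} g'"
    and pg: "\<And>x. x \<in> {a..b} \<Longrightarrow> g' x \<ge> 0"
    and ga: "g a = 0" and gb: "g b = 1"
    and pw: "\<And>x. x \<in> {a..b} \<Longrightarrow> bf k (g x) * g' x = ho_weight k x"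
  shows "integral {a..b} (ho_weight k) = 16 powr k * Beta (k + 1/2) (k + 1/2)"
proof -
  have kk: "k + 1/2 > 0" using k by simp
  have si0: "set_integrable lborel {0..1} (\<lambda>t. t powr (k + 1/2 - 1) * (1 - t) powr (k + 1/2 - 1))"
    by (rule integrable_Beta[OF kk kk])
  have si: "set_integrable lborel {g a..g b} (bf k)"
    unfolding ga gb bf_def using si0 by (intro set_integrable_mult_right) auto
  note sub = integral_substitution[OF si dg cg pg ab]
  have "(LBINT x. bf k x * indicator {g a..g b} x) = (LINT x:{0..1}|lborel. bf k x)"
    unfolding set_lebesgue_integral_def ga gb by (simp add: mult.commute)
  also have "\<dots> = integral {0..1} (bf k)"
    using set_borel_integral_eq_integral(2)[OF si[unfolded ga gb]] .
  also have "\<dots> = 16 powr k * Beta (k + 1/2) (k + 1/2)"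
    unfolding bf_def using has_integral_Beta_real[OF kk kk] by (simp add: integral_unique)
  finally have L: "(LBINT x. bf k x * indicator {g a..g b} x) = 16 powr k * Beta (k + 1/2) (k + 1/2)" .
  have "(LBINT x. bf k (g x) * g' x * indicator {a..b} x) = (LINT x:{a..b}|lborel. bf k (g x) * g' x)"
    unfolding set_lebesgue_integral_def by (simp add: mult.commute)
  also have "\<dots> = integral {a..b} (\<lambda>x. bf k (g x) * g' x)"
    using set_borel_integral_eq_integral(2)[OF sub(1)] .
  also have "\<dots> = integral {a..b} (ho_weight k)"
    by (rule integral_cong) (use pw in auto)
  finally show ?thesis using L sub(2) by simp
qed

lemma pw_core:
  assumes k: "k > 0" and s: "s \<ge> 0" and cs: "c^2 + s^2 = 1"
  shows "bf k ((1 - c) / 2) * (s / 2) = \<bar>2 * s\<bar> powr (2 * k)"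
proof (cases "s = 0")
  case True then show ?thesis using k by simp
next
  case False
  with s have sp: "s > 0" by simp
  have "s^2 > 0" using sp by simp
  then have c2: "c^2 < 1" using cs by linarith
  then have cb: "-1 < c" "c < 1" by (auto simp: abs_square_less_1 abs_less_iff)
  define t where "t = (1 - c) / 2"
  have t0: "t > 0" "1 - t > 0" using cb by (auto simp: t_def)
  have tt: "t * (1 - t) = (s/2)^2"
  proof -
    have "t * (1 - t) = (1 - c^2) / 4" by (simp add: t_def field_simps power2_eq_square)
    also have "1 - c^2 = s^2" using cs by simp
    finally show ?thesis by (simp add: power_divide)
  qed
  have "bf k t = 16 powr k * (t * (1 - t)) powr (k - 1/2)"
    unfolding bf_def using t0 by (simp add: powr_mult)
  also have "(t * (1 - t)) powr (k - 1/2) = (s/2) powr (2*k - 1)"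
  proof -
    have "(s/2)^2 = (s/2) powr 2" using sp by (simp add: powr_numeral)
    then have "(t * (1 - t)) powr (k - 1/2) = ((s/2) powr 2) powr (k - 1/2)" by (simp only: tt)
    also have "\<dots> = (s/2) powr (2 * (k - 1/2))" by (simp only: powr_powr)
    finally show ?thesis by (simp add: algebra_simps)
  qed
  finally have A: "bf k t * (s/2) = 16 powr k * ((s/2) powr (2*k - 1) * (s/2) powr 1)"
    using sp by simp
  have B: "(s/2) powr (2*k - 1) * (s/2) powr 1 = (s/2) powr (2*k)"
    by (simp only: powr_add[symmetric]) simp
  have C: "(16::real) powr k = 4 powr (2 * k)"
  proof -
    have "(16::real) = 4 powr 2" by (simp add: powr_numeral)
    then have "(16::real) powr k = (4 powr 2) powr k" by simp
    also have "\<dots> = 4 powr (2 * k)" by (simp only: powr_powr)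
    finally show ?thesis .
  qed
  have D: "(4::real) powr (2*k) * (s/2) powr (2*k) = (4 * (s/2)) powr (2*k)"
    using sp by (simp only: powr_mult[symmetric])
  have "bf k t * (s/2) = (2 * s) powr (2*k)"
    unfolding A B C D by simp
  then show ?thesis using sp unfolding t_def by simp
qed

lemma W_value:
  assumes k: "k > 0"
  shows "integral {0..2*pi} (ho_weight k) = 2 * 16 powr k * Beta (k + 1/2) (k + 1/2)"
proof -
  have I1: "integral {0..pi} (ho_weight k) = 16 powr k * Beta (k + 1/2) (k + 1/2)"
  proof (rule subst_half[OF k, of 0 pi "\<lambda>x. (1 - cos x)/2" "\<lambda>x. sin x / 2"])
    fix x :: real assume x: "x \<in> {0..pi}"
    have "sin x \<ge> 0" using x by (auto intro: sin_ge_zero)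
    from pw_core[OF k this, of "cos x"] show "bf k ((1 - cos x) / 2) * (sin x / 2) = ho_weight k x"
      using k by (simp add: ho_weight_def)
  qed (auto intro!: derivative_eq_intros continuous_intros sin_ge_zero)
  have I2: "integral {pi..2*pi} (ho_weight k) = 16 powr k * Beta (k + 1/2) (k + 1/2)"
  proof (rule subst_half[OF k, of pi "2*pi" "\<lambda>x. (1 - (- cos x))/2" "\<lambda>x. - sin x / 2"])
    fix x :: real assume x: "x \<in> {pi..2*pi}"
    have "sin x \<le> 0"
    proof (cases "x = 2*pi")
      case True then show ?thesis by simp
    next
      case False then show ?thesis using x by (auto intro: sin_le_zero)
    qed
    then have "- sin x \<ge> 0" by simp
    from pw_core[OF k this, of "- cos x"] show "bf k ((1 - - cos x) / 2) * (- sin x / 2) = ho_weight k x"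
      using k by (simp add: ho_weight_def)
  next
    fix x :: real assume x: "x \<in> {pi..2*pi}"
    have "sin x \<le> 0"
    proof (cases "x = 2*pi")
      case True then show ?thesis by simp
    next
      case False then show ?thesis using x by (auto intro: sin_le_zero)
    qed
    then show "- sin x / 2 \<ge> 0" by simp
  qed (auto intro!: derivative_eq_intros continuous_intros)
  have int: "ho_weight k integrable_on {0..2*pi}"
    using weight_cont[of k] k by (auto intro: integrable_continuous_interval continuous_on_subset)
  have "integral {0..2*pi} (ho_weight k) = integral {0..pi} (ho_weight k) + integral {pi..2*pi} (ho_weight k)"
    using Henstock_Kurzweil_Integration.integral_combine[OF _ _ int, of pi] by simp
  then show ?thesis using I1 I2 by simp
qed



definition M0 :: "real \<Rightarrow> real" where
  "M0 k = 2 * pi * Gamma (2 * k + 1) / (Gamma (k + 1))^2"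

lemma dup_real:
  fixes z :: real assumes z: "z > 0"
  shows "Gamma z * Gamma (z + 1/2) = 2 powr (1 - 2*z) * sqrt pi * Gamma (2*z)"
proof -
  have n1: "complex_of_real z \<notin> \<int>\<^sub>\<le>\<^sub>0" using z
    by (auto simp: of_real_in_nonpos_Ints_iff dest: nonpos_Ints_nonpos)
  have n2: "complex_of_real z + 1/2 \<notin> \<int>\<^sub>\<le>\<^sub>0"
  proof -
    have "complex_of_real z + 1/2 = complex_of_real (z + 1/2)" by simp
    moreover have "z + 1/2 \<notin> \<int>\<^sub>\<le>\<^sub>0" using z by (auto dest: nonpos_Ints_nonpos)
    ultimately show ?thesis by (metis of_real_in_nonpos_Ints_iff)
  qed
  note eq = Gamma_legendre_duplication[OF n1 n2]
  have l: "complex_of_real (Gamma z * Gamma (z + 1/2)) = Gamma (complex_of_real z) * Gamma (complex_of_real z + 1/2)"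
    by (simp flip: Gamma_complex_of_real)
  have r: "complex_of_real (exp ((1 - 2*z) * ln 2) * sqrt pi * Gamma (2*z)) =
      exp ((1 - 2 * complex_of_real z) * complex_of_real (ln 2)) * complex_of_real (sqrt pi) * Gamma (2 * complex_of_real z)"
    by (simp flip: Gamma_complex_of_real exp_of_real)
  have "complex_of_real (Gamma z * Gamma (z + 1/2)) = complex_of_real (exp ((1 - 2*z) * ln 2) * sqrt pi * Gamma (2*z))"
    unfolding l r by (rule eq)
  then have "Gamma z * Gamma (z + 1/2) = exp ((1 - 2*z) * ln 2) * sqrt pi * Gamma (2*z)"
    by (simp only: of_real_eq_iff)
  then show ?thesis by (simp add: powr_def)
qed

lemma integral_of_real_cplx:
  assumes "f integrable_on S"
  shows "integral S (\<lambda>x. complex_of_real (f x)) = complex_of_real (integral S f)"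
  using integral_linear[OF assms bounded_linear_of_real] by (simp add: o_def)

lemma mom0:
  assumes k: "k \<ge> 0"
  shows "mom k 0 = complex_of_real (M0 k)"
proof -
  have int: "ho_weight k integrable_on {0..2*pi}"
    using weight_cont[OF k] by (auto intro: integrable_continuous_interval continuous_on_subset)
  have "mom k 0 = integral {0..2*pi} (\<lambda>x. complex_of_real (ho_weight k x))"
    by (simp add: mom_def)
  also have "\<dots> = complex_of_real (integral {0..2*pi} (ho_weight k))"
    by (rule integral_of_real_cplx[OF int])
  also have "integral {0..2*pi} (ho_weight k) = M0 k"
  proof (cases "k = 0")
    case True
    then show ?thesis by (simp add: ho_weight_def[abs_def] M0_def)
  next
    case False
    with k have kp: "k > 0" by simp
    have D: "Gamma (k + 1/2) * Gamma (k + 1) = 2 powr (- 2*k) * sqrt pi * Gamma (2*k + 1)"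
      using dup_real[of "k + 1/2"] kp by (simp add: algebra_simps)
    have g1: "Gamma (k + 1) > 0" "Gamma (2*k+1) > 0" using kp by auto
    have G: "Gamma (k + 1/2) = 2 powr (- 2*k) * sqrt pi * Gamma (2*k + 1) / Gamma (k + 1)"
      using D g1 by (simp add: field_simps)
    have p: "16 powr k * (2 powr (- 2*k))^2 = 1"
    proof -
      have "(16::real) powr k = 2 powr (4 * k)"
      proof -
        have "(16::real) = 2 powr 4" by (simp add: powr_numeral)
        then have "(16::real) powr k = (2 powr 4) powr k" by simp
        also have "\<dots> = 2 powr (4 * k)" by (simp only: powr_powr)
        finally show ?thesis .
      qed
      moreover have "(2 powr (- 2*k))^2 = 2 powr (- 4 * k)"
        by (simp add: power2_eq_square powr_add[symmetric])
      ultimately show ?thesis by (simp add: powr_add[symmetric])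
    qed
    have B: "Beta (k + 1/2) (k + 1/2) = Gamma (k + 1/2)^2 / Gamma (2*k+1)"
      by (simp add: Beta_def power2_eq_square algebra_simps)
    show ?thesis
      unfolding W_value[OF kp] B G M0_def using g1 p
      by (simp add: field_simps power2_eq_square)
  qed
  finally show ?thesis .
qed



definition aa :: "real \<Rightarrow> int \<Rightarrow> real" where
  "aa k m = (-1)^(nat \<bar>m\<bar>) * (Gamma (k + 1))^2 * rGamma (k + 1 + of_int m) * rGamma (k + 1 - of_int m)"

lemma aa0: "k \<ge> 0 \<Longrightarrow> aa k 0 = 1"
proof -
  assume k: "k \<ge> 0"
  then have "Gamma (k + 1) > 0" by auto
  then show ?thesis by (simp add: aa_def rGamma_inverse_Gamma power2_eq_square field_simps)
qed

lemma aa_sym: "aa k (- m) = aa k m"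
  by (simp add: aa_def algebra_simps)

lemma sign_step: "(-1::real)^(nat \<bar>m\<bar>) = - ((-1)^(nat \<bar>m - 1\<bar>))"
proof (cases "m \<ge> 1")
  case True
  then have e: "nat \<bar>m\<bar> = Suc (nat \<bar>m - 1\<bar>)" by simp
  show ?thesis by (simp only: e power_Suc mult_minus1 minus_minus)
next
  case False
  then have e: "nat \<bar>m - 1\<bar> = Suc (nat \<bar>m\<bar>)" by simp
  show ?thesis by (simp only: e power_Suc mult_minus1 minus_minus)
qed

lemma aa_rec: "(of_int m + k) * aa k m = (of_int m - 1 - k) * aa k (m - 1)"
proof -
  have r1: "(k + of_int m) * rGamma (k + 1 + of_int m) = rGamma (k + of_int m)"
    using rGamma_plus1[of "k + of_int m"] by (simp add: algebra_simps)
  have r2: "rGamma (k + 1 - of_int m) = (k + 1 - of_int m) * rGamma (k + 1 - of_int (m - 1))"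
    using rGamma_plus1[of "k + 1 - of_int m"] by (simp add: algebra_simps)
  have "(of_int m + k) * aa k m = (-1)^(nat \<bar>m\<bar>) * (Gamma (k + 1))^2 *
      ((k + of_int m) * rGamma (k + 1 + of_int m)) * rGamma (k + 1 - of_int m)"
    by (simp add: aa_def algebra_simps)
  also have "\<dots> = (-1)^(nat \<bar>m\<bar>) * (Gamma (k + 1))^2 * rGamma (k + of_int m) *
      ((k + 1 - of_int m) * rGamma (k + 1 - of_int (m - 1)))"
    unfolding r1 r2 ..
  also have "\<dots> = (of_int m - 1 - k) * aa k (m - 1)"
    unfolding aa_def sign_step[of m] by (simp add: algebra_simps)
  finally show ?thesis .
qed

lemma rec_unique:
  fixes X Y :: "int \<Rightarrow> complex"
  assumes k: "k \<ge> 0"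
    and rX: "\<And>m. (of_int m + of_real k) * X m = (of_int m - 1 - of_real k) * X (m - 1)"
    and rY: "\<And>m. (of_int m + of_real k) * Y m = (of_int m - 1 - of_real k) * Y (m - 1)"
    and b: "X 0 = Y 0"
  shows "X m = Y m"
proof -
  have up: "X (int n) = Y (int n)" for n
  proof (induction n)
    case 0 then show ?case using b by simp
  next
    case (Suc n)
    have nz: "of_int (int (Suc n)) + complex_of_real k \<noteq> 0"
    proof
      assume "of_int (int (Suc n)) + complex_of_real k = 0"
      then have "complex_of_real (real (Suc n) + k) = 0" by simp
      then have "real (Suc n) + k = 0" by (simp only: of_real_eq_0_iff)
      with k show False by simp
    qed
    from rX[of "int (Suc n)"] rY[of "int (Suc n)"] Suc.IH
    have "(of_int (int (Suc n)) + complex_of_real k) * X (int (Suc n)) =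
          (of_int (int (Suc n)) + complex_of_real k) * Y (int (Suc n))" by simp
    with nz show ?case by simp
  qed
  have down: "X (- int n) = Y (- int n)" for n
  proof (induction n)
    case 0 then show ?case using b by simp
  next
    case (Suc n)
    have nz: "of_int (- int n) - 1 - complex_of_real k \<noteq> 0"
    proof
      assume "of_int (- int n) - 1 - complex_of_real k = 0"
      then have "complex_of_real (- real n - 1 - k) = 0" by simp
      then have "- real n - 1 - k = 0" by (simp only: of_real_eq_0_iff)
      with k show False by simp
    qed
    from rX[of "- int n"] rY[of "- int n"] Suc.IH
    have "(of_int (- int n) - 1 - complex_of_real k) * X (- int n - 1) =
          (of_int (- int n) - 1 - complex_of_real k) * Y (- int n - 1)" by simp
    with nz have "X (- int n - 1) = Y (- int n - 1)" by simp
    moreover have "- int (Suc n) = - int n - 1" by simp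
    ultimately show ?case by (simp only:)
  qed
  show ?thesis
  proof (cases "m \<ge> 0")
    case True
    then obtain n where "m = int n" by (metis nonneg_eq_int)
    then show ?thesis using up by simp
  next
    case False
    then obtain n where "m = - int n" by (metis le_cases neg_0_le_iff_le nonneg_eq_int minus_minus)
    then show ?thesis using down by simp
  qed
qed

lemma mom_even:
  assumes k: "k \<ge> 0"
  shows "mom k (2 * m) = complex_of_real (M0 k * aa k m)"
proof -
  have rX: "(of_int m + of_real k) * mom k (2 * m) = (of_int m - 1 - of_real k) * mom k (2 * (m - 1))" for m
  proof -
    have "(of_int (2*m - 2) + 2 + 2 * of_real k) * mom k (2*m - 2 + 2) + (2 * of_real k - of_int (2*m - 2)) * mom k (2*m - 2) = 0"
      by (rule mom_rec[OF k])
    then have "2 * ((of_int m + of_real k) * mom k (2 * m)) = 2 * ((of_int m - 1 - of_real k) * mom k (2 * (m - 1)))"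
      by (simp add: algebra_simps)
    then show ?thesis by simp
  qed
  have rY: "(of_int m + of_real k) * complex_of_real (M0 k * aa k m) =
      (of_int m - 1 - of_real k) * complex_of_real (M0 k * aa k (m - 1))" for m
  proof -
    have "complex_of_real (M0 k * ((of_int m + k) * aa k m)) = complex_of_real (M0 k * ((of_int m - 1 - k) * aa k (m - 1)))"
      by (simp only: aa_rec)
    then show ?thesis by (simp add: algebra_simps)
  qed
  show ?thesis
    by (rule rec_unique[OF k, of "\<lambda>m. mom k (2 * m)" "\<lambda>m. complex_of_real (M0 k * aa k m)", OF rX rY])
       (simp add: mom0[OF k] aa0[OF k])
qed



lemma alt_shift:
  fixes f :: "nat \<Rightarrow> real"
  shows "(\<Sum>j\<le>Suc n. (-1)^j * real (Suc n choose j) * f j) =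
         (\<Sum>j\<le>n. (-1)^j * real (n choose j) * (f j - f (Suc j)))"
proof -
  have "(\<Sum>j\<le>Suc n. (-1)^j * real (Suc n choose j) * f j) =
        f 0 + (\<Sum>j\<le>n. (-1)^(Suc j) * real (Suc n choose Suc j) * f (Suc j))"
    by (subst sum.atMost_Suc_shift) simp
  also have "(\<Sum>j\<le>n. (-1)^(Suc j) * real (Suc n choose Suc j) * f (Suc j)) =
      - (\<Sum>j\<le>n. (-1)^j * real (n choose j) * f (Suc j)) - (\<Sum>j\<le>n. (-1)^j * real (n choose Suc j) * f (Suc j))"
    by (simp add: binomial_Suc_Suc algebra_simps sum.distrib sum_negf sum_subtractf)
  also have "(\<Sum>j\<le>n. (-1)^j * real (n choose Suc j) * f (Suc j)) =
      - ((\<Sum>j\<le>Suc n. (-1)^j * real (n choose j) * f j) - f 0)"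
    by (subst sum.atMost_Suc_shift) (simp add: sum_negf)
  also have "(\<Sum>j\<le>Suc n. (-1)^j * real (n choose j) * f j) = (\<Sum>j\<le>n. (-1)^j * real (n choose j) * f j)"
    by simp
  finally show ?thesis by (simp add: sum_subtractf algebra_simps)
qed

lemma degree_shift_diff:
  fixes p :: "real poly"
  assumes "degree p > 0"
  shows "degree (p - pcompose p [:1, 1:]) < degree p"
proof -
  let ?r = "pcompose p [:1, 1:]"
  have dr: "degree ?r = degree p" by (simp add: degree_pcompose)
  have lr: "lead_coeff ?r = lead_coeff p" by (simp add: lead_coeff_comp)
  have le: "degree (p - ?r) \<le> degree p" using degree_diff_le[of p "degree p" ?r] dr by simp
  have c0: "coeff (p - ?r) (degree p) = 0" using lr dr by simp
  show ?thesis
  proof (cases "p - ?r = 0")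
    case True then show ?thesis using assms by simp
  next
    case False
    then have "coeff (p - ?r) (degree (p - ?r)) \<noteq> 0" by (rule leading_coeff_neq_0)
    with c0 have "degree (p - ?r) \<noteq> degree p" by auto
    with le show ?thesis by simp
  qed
qed

lemma fin_diff:
  fixes p :: "real poly"
  assumes "degree p < n \<or> p = 0"
  shows "(\<Sum>j\<le>n. (-1)^j * real (n choose j) * poly p (real j)) = 0"
  using assms
proof (induction n arbitrary: p)
  case 0 then show ?case by simp
next
  case (Suc n)
  let ?q = "p - pcompose p [:1, 1:]"
  have q: "poly ?q (real j) = poly p (real j) - poly p (real (Suc j))" for j
    by (simp add: poly_pcompose algebra_simps)
  have "degree ?q < n \<or> ?q = 0"
  proof (cases "degree p = 0")
    case True
    then obtain c where "p = [:c:]" by (metis degree_eq_zeroE)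
    then show ?thesis by (simp add: pcompose_pCons)
  next
    case False
    then have "degree ?q < degree p" by (intro degree_shift_diff) simp
    with Suc.prems show ?thesis by auto
  qed
  then have "(\<Sum>j\<le>n. (-1)^j * real (n choose j) * poly ?q (real j)) = 0" by (rule Suc.IH)
  then have "(\<Sum>j\<le>n. (-1)^j * real (n choose j) * (poly p (real j) - poly p (real (Suc j)))) = 0"
    unfolding q .
  then show ?case unfolding alt_shift[of n "\<lambda>j. poly p (real j)"] .
qed



definition cc :: "real \<Rightarrow> nat \<Rightarrow> nat \<Rightarrow> real" where
  "cc k n j = real (n choose j) * pochhammer k (n - j) * pochhammer (k + 1) j / pochhammer (k + 1) n"

lemma sign_diff: "(-1::real)^(nat \<bar>int a - int b\<bar>) = (-1)^a * (-1)^b"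
proof -
  have "a + b = nat \<bar>int a - int b\<bar> + 2 * min a b" by auto
  then have "(-1::real)^(a + b) = (-1)^(nat \<bar>int a - int b\<bar>) * ((-1)^2)^(min a b)"
    by (simp only: power_add power_mult)
  then show ?thesis by (simp add: power_add)
qed

lemma F1: "pochhammer (k + 1) j * rGamma (k + 1 + real j - real l) = pochhammer (k + 1 + real j - real l) l * rGamma (k + 1)"
proof -
  have a: "rGamma (k + 1) = pochhammer (k + 1) j * rGamma (k + 1 + real j)"
    by (rule pochhammer_rGamma)
  have b: "rGamma (k + 1 + real j - real l) = pochhammer (k + 1 + real j - real l) l * rGamma (k + 1 + real j)"
    using pochhammer_rGamma[of "k + 1 + real j - real l" l] by simp
  show ?thesis unfolding a b by (simp add: algebra_simps)
qed

lemma F2: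
  assumes "j \<le> n" "l < n"
  shows "pochhammer k (n - j) * rGamma (k + 1 + real l - real j) = pochhammer (k + 1 + real l - real j) (n - 1 - l) * rGamma k"
proof -
  have a: "rGamma k = pochhammer k (n - j) * rGamma (k + real (n - j))"
    by (rule pochhammer_rGamma)
  have e: "k + 1 + real l - real j + real (n - 1 - l) = k + real (n - j)"
    using assms by (simp add: of_nat_diff)
  have b: "rGamma (k + 1 + real l - real j) = pochhammer (k + 1 + real l - real j) (n - 1 - l) * rGamma (k + real (n - j))"
    using pochhammer_rGamma[of "k + 1 + real l - real j" "n - 1 - l"] unfolding e .
  show ?thesis unfolding a b by (simp add: algebra_simps)
qed

definition Ppoly :: "real \<Rightarrow> nat \<Rightarrow> nat \<Rightarrow> real poly" where
  "Ppoly k n l = (\<Prod>i<l. [:k + 1 - real l + real i, 1:]) * (\<Prod>i<n - 1 - l. [:k + 1 + real l + real i, -1:])"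

lemma Ppoly_eval: "poly (Ppoly k n l) x = pochhammer (k + 1 + x - real l) l * pochhammer (k + 1 + real l - x) (n - 1 - l)"
  by (simp add: Ppoly_def poly_prod pochhammer_prod atLeast0LessThan algebra_simps)

lemma Ppoly_degree: "l < n \<Longrightarrow> degree (Ppoly k n l) < n"
proof -
  assume l: "l < n"
  have d1: "degree (\<Prod>i<l. [:k + 1 - real l + real i, 1:]) \<le> l"
    using degree_prod_sum_le[of "{..<l}" "\<lambda>i. [:k + 1 - real l + real i, 1:]"] by simp
  have d2: "degree (\<Prod>i<n - 1 - l. [:k + 1 + real l + real i, -1:]) \<le> n - 1 - l"
    using degree_prod_sum_le[of "{..<n - 1 - l}" "\<lambda>i. [:k + 1 + real l + real i, -1:]"] by simp
  have "degree (Ppoly k n l) \<le> l + (n - 1 - l)"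
    unfolding Ppoly_def using degree_mult_le d1 d2 by (meson add_mono order_trans)
  with l show ?thesis by simp
qed

lemma orth_cc:
  assumes l: "l < n"
  shows "(\<Sum>j\<le>n. cc k n j * aa k (int j - int l)) = 0"
proof -
  define K where "K = (-1)^l * (Gamma (k + 1))^2 * rGamma (k + 1) * rGamma k / pochhammer (k + 1) n"
  have t: "cc k n j * aa k (int j - int l) = K * ((-1)^j * real (n choose j) * poly (Ppoly k n l) (real j))"
    if j: "j \<le> n" for j
  proof -
    have "cc k n j * aa k (int j - int l) =
       (-1)^j * (-1)^l * (Gamma (k + 1))^2 * real (n choose j) / pochhammer (k + 1) n *
       (pochhammer (k + 1) j * rGamma (k + 1 + real j - real l)) *
       (pochhammer k (n - j) * rGamma (k + 1 + real l - real j))"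
      unfolding cc_def aa_def sign_diff by (simp add: algebra_simps)
    also have "\<dots> = K * ((-1)^j * real (n choose j) * poly (Ppoly k n l) (real j))"
      unfolding F1 F2[OF j l] Ppoly_eval K_def by (simp add: algebra_simps)
    finally show ?thesis .
  qed
  have "(\<Sum>j\<le>n. cc k n j * aa k (int j - int l)) = K * (\<Sum>j\<le>n. (-1)^j * real (n choose j) * poly (Ppoly k n l) (real j))"
    by (simp add: t sum_distrib_left)
  also have "(\<Sum>j\<le>n. (-1)^j * real (n choose j) * poly (Ppoly k n l) (real j)) = 0"
    by (rule fin_diff) (use Ppoly_degree[OF l] in simp)
  finally show ?thesis by simp
qed



lemma poch_pos: "k > 0 \<Longrightarrow> pochhammer k n > (0::real)"
  by (simp add: pochhammer_pos)

lemma pf_sum: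
  assumes "k > 0"
  shows "(\<Sum>j\<le>n. (-1)^j * real (n choose j) * (1 / (k + real n - real j))) = (-1)^n * fact n / pochhammer k (Suc n)"
  using assms
proof (induction n arbitrary: k)
  case 0 then show ?case by simp
next
  case (Suc n)
  have k1: "k + 1 > 0" using Suc.prems by simp
  have "(\<Sum>j\<le>Suc n. (-1)^j * real (Suc n choose j) * (1 / (k + real (Suc n) - real j))) =
     (\<Sum>j\<le>n. (-1)^j * real (n choose j) * (1 / (k + real (Suc n) - real j) - 1 / (k + real (Suc n) - real (Suc j))))"
    by (rule alt_shift)
  also have "\<dots> = (\<Sum>j\<le>n. (-1)^j * real (n choose j) * (1 / ((k + 1) + real n - real j)))
       - (\<Sum>j\<le>n. (-1)^j * real (n choose j) * (1 / (k + real n - real j)))"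
    by (simp add: sum_subtractf algebra_simps)
  also have "\<dots> = (-1)^n * fact n / pochhammer (k + 1) (Suc n) - (-1)^n * fact n / pochhammer k (Suc n)"
    using Suc.IH[OF k1] Suc.IH[OF Suc.prems] by simp
  also have "\<dots> = (-1)^(Suc n) * fact (Suc n) / pochhammer k (Suc (Suc n))"
  proof -
    have p1: "pochhammer k (Suc (Suc n)) = k * pochhammer (k + 1) (Suc n)"
      by (simp add: pochhammer_rec)
    have p2: "pochhammer k (Suc (Suc n)) = pochhammer k (Suc n) * (k + real (Suc n))"
      by (simp add: pochhammer_rec' algebra_simps)
    have a: "pochhammer (k + 1) (Suc n) > 0" "pochhammer k (Suc n) > 0" "k > 0"
      using Suc.prems by (auto simp: pochhammer_pos)
    have "1 / pochhammer (k + 1) (Suc n) - 1 / pochhammer k (Suc n) = - real (Suc n) / pochhammer k (Suc (Suc n))"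
    proof -
      have "1 / pochhammer (k + 1) (Suc n) = k / pochhammer k (Suc (Suc n))"
        using a unfolding p1 by simp
      moreover have "1 / pochhammer k (Suc n) = (k + real (Suc n)) / pochhammer k (Suc (Suc n))"
        using a unfolding p2 by simp
      ultimately show ?thesis by (simp add: diff_divide_distrib[symmetric])
    qed
    then have "(-1)^n * fact n * (1 / pochhammer (k + 1) (Suc n) - 1 / pochhammer k (Suc n)) =
        (-1)^n * fact n * (- real (Suc n) / pochhammer k (Suc (Suc n)))" by simp
    then show ?thesis by (simp add: algebra_simps)
  qed
  finally show ?case .
qed



definition NV :: "real \<Rightarrow> nat \<Rightarrow> real" where
  "NV k n = fact n * pochhammer (2 * k + 1) n / (pochhammer (k + 1) n)^2"

lemma F3:
  assumes k: "k > 0" and j: "j \<le> n"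
  shows "pochhammer k (n - j) * rGamma (k + 1 + real n - real j) = rGamma k / (k + real n - real j)"
proof -
  define z where "z = k + real n - real j"
  have e: "k + real (n - j) = z" using j by (simp add: of_nat_diff z_def)
  have a: "rGamma k = pochhammer k (n - j) * rGamma z"
    using pochhammer_rGamma[of k "n - j"] unfolding e .
  have b: "z * rGamma (z + 1) = rGamma z"
    by (rule rGamma_plus1)
  have e2: "k + 1 + real n - real j = z + 1" by (simp add: z_def)
  have pos: "z > 0" using k j by (simp add: z_def)
  have "rGamma k = pochhammer k (n - j) * z * rGamma (z + 1)"
    using a b by simp
  then show ?thesis unfolding e2 z_def[symmetric] using pos by (simp add: field_simps)
qed
definition Qpoly :: "real \<Rightarrow> nat \<Rightarrow> real poly" where
  "Qpoly k n = (\<Prod>i<n. [:k + 1 - real n + real i, 1:])"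

lemma Qpoly_eval: "poly (Qpoly k n) x = pochhammer (k + 1 + x - real n) n"
  by (simp add: Qpoly_def poly_prod pochhammer_prod atLeast0LessThan algebra_simps)

lemma Qpoly_degree: "degree (Qpoly k n) \<le> n"
  using degree_prod_sum_le[of "{..<n}" "\<lambda>i. [:k + 1 - real n + real i, 1:]"] by (simp add: Qpoly_def)

lemma norm_cc_pos:
  assumes k: "k > 0"
  shows "(\<Sum>j\<le>n. cc k n j * aa k (int j - int n)) = NV k n"
proof -
  define x0 where "x0 = k + real n"
  define c where "c = poly (Qpoly k n) x0"
  have "poly (Qpoly k n - [:c:]) x0 = 0" by (simp add: c_def)
  then have "[:- x0, 1:] dvd (Qpoly k n - [:c:])" by (simp only: poly_eq_0_iff_dvd)
  then obtain R where R: "Qpoly k n - [:c:] = [:- x0, 1:] * R"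
    by (rule dvdE)
  have Rev: "poly (Qpoly k n) x = c + (x - x0) * poly R x" for x
  proof -
    have "poly (Qpoly k n - [:c:]) x = poly ([:- x0, 1:] * R) x" by (simp only: R)
    then show ?thesis by (simp add: algebra_simps)
  qed
  have Rdeg: "degree R < n \<or> R = 0"
  proof (cases "R = 0")
    case False
    have "degree ([:- x0, 1:] * R) = degree [:- x0, 1:] + degree R"
      by (rule degree_mult_eq) (use False in auto)
    then have "degree ([:- x0, 1:] * R) = Suc (degree R)" by simp
    moreover have "degree (Qpoly k n - [:c:]) \<le> n"
      using degree_diff_le[of "Qpoly k n" n "[:c:]"] Qpoly_degree by simp
    ultimately show ?thesis using R by simp
  qed simp
  have Rsum: "(\<Sum>j\<le>n. (-1)^j * real (n choose j) * poly R (real j)) = 0"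
    by (rule fin_diff[OF Rdeg])
  have c_eq: "c = pochhammer (2 * k + 1) n"
    unfolding c_def Qpoly_eval x0_def by (simp add: algebra_simps)
  have pk: "pochhammer (k + 1) n > 0" using k by (simp add: pochhammer_pos)
  have g: "Gamma (k + 1) > 0" using k by simp
  have rg: "rGamma k = k * rGamma (k + 1)" using rGamma_plus1[of k] by simp
  have gg: "Gamma (k + 1) * rGamma (k + 1) = 1" using g by (simp add: rGamma_inverse_Gamma)
  define C where "C = (-1)^n * k / pochhammer (k + 1) n"
  have t: "cc k n j * aa k (int j - int n) =
      C * ((-1)^j * real (n choose j) * (c * (1 / (k + real n - real j)) - poly R (real j)))"
    if j: "j \<le> n" for j
  proof -
    have pos: "k + real n - real j > 0" using k j by simp
    define Y where "Y = poly (Qpoly k n) (real j) / (k + real n - real j)"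
    have "cc k n j * aa k (int j - int n) =
       (-1)^j * (-1)^n * (Gamma (k + 1))^2 * real (n choose j) / pochhammer (k + 1) n *
       (pochhammer (k + 1) j * rGamma (k + 1 + real j - real n)) *
       (pochhammer k (n - j) * rGamma (k + 1 + real n - real j))"
      unfolding cc_def aa_def sign_diff by (simp add: algebra_simps)
    also have "\<dots> = (-1)^j * (-1)^n * (Gamma (k + 1) * rGamma (k + 1))^2 * k * real (n choose j) / pochhammer (k + 1) n * Y"
      unfolding F1 F3[OF k j] Qpoly_eval rg Y_def by (simp add: algebra_simps power2_eq_square)
    also have "\<dots> = C * ((-1)^j * real (n choose j) * Y)"
      unfolding gg C_def using pk by (simp add: field_simps)
    also have "Y = c * (1 / (k + real n - real j)) - poly R (real j)"
      unfolding Y_def Rev x0_def using pos by (simp add: field_simps)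
    finally show ?thesis .
  qed
  have "(\<Sum>j\<le>n. cc k n j * aa k (int j - int n)) =
      C * (c * (\<Sum>j\<le>n. (-1)^j * real (n choose j) * (1 / (k + real n - real j)))
           - (\<Sum>j\<le>n. (-1)^j * real (n choose j) * poly R (real j)))"
    by (simp add: t sum_distrib_left sum_subtractf algebra_simps)
  also have "\<dots> = C * (c * ((-1)^n * fact n / pochhammer k (Suc n)))"
    unfolding Rsum pf_sum[OF k] by simp
  also have "pochhammer k (Suc n) = k * pochhammer (k + 1) n" by (simp add: pochhammer_rec)
  also have "C * (c * ((-1)^n * fact n / (k * pochhammer (k + 1) n))) = NV k n"
    unfolding C_def c_eq NV_def using k pk
    by (simp add: field_simps power2_eq_square flip: power_add mult_2)
  finally show ?thesis .
qed



lemma norm_cc: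
  assumes k: "k \<ge> 0"
  shows "(\<Sum>j\<le>n. cc k n j * aa k (int j - int n)) = NV k n"
proof (cases "k = 0")
  case False
  with k show ?thesis using norm_cc_pos by simp
next
  case True
  have z: "cc 0 n j = 0" if "j < n" for j
    using that by (simp add: cc_def pochhammer_0_left)
  have "(\<Sum>j\<le>n. cc 0 n j * aa 0 (int j - int n)) = cc 0 n n * aa 0 0 + (\<Sum>j\<in>{..n} - {n}. cc 0 n j * aa 0 (int j - int n))"
    by (subst sum.remove[of _ n]) auto
  also have "(\<Sum>j\<in>{..n} - {n}. cc 0 n j * aa 0 (int j - int n)) = 0"
    by (rule sum.neutral) (auto simp: z)
  also have "cc 0 n n = 1" by (simp add: cc_def pochhammer_eq_0_iff)
  also have "aa 0 0 = 1" by (rule aa0) simp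
  finally show ?thesis using True
    by (simp add: NV_def pochhammer_fact[symmetric] power2_eq_square)
qed

lemma cc_nn: "k \<ge> 0 \<Longrightarrow> cc k n n = 1"
proof -
  assume k: "k \<ge> 0"
  have "pochhammer (k + 1) n > 0" using k by (intro pochhammer_pos) simp
  then show ?thesis by (simp add: cc_def)
qed

lemma qf_cc:
  assumes k: "k \<ge> 0"
  shows "(\<Sum>i\<le>n. \<Sum>l\<le>n. cc k n i * cc k n l * aa k (int i - int l)) = NV k n"
proof -
  have "(\<Sum>i\<le>n. \<Sum>l\<le>n. cc k n i * cc k n l * aa k (int i - int l)) =
        (\<Sum>l\<le>n. cc k n l * (\<Sum>i\<le>n. cc k n i * aa k (int i - int l)))"
    by (subst sum.swap) (simp add: sum_distrib_left algebra_simps)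
  also have "\<dots> = cc k n n * (\<Sum>i\<le>n. cc k n i * aa k (int i - int n)) +
       (\<Sum>l\<in>{..n} - {n}. cc k n l * (\<Sum>i\<le>n. cc k n i * aa k (int i - int l)))"
    by (subst sum.remove[of _ n]) auto
  also have "(\<Sum>l\<in>{..n} - {n}. cc k n l * (\<Sum>i\<le>n. cc k n i * aa k (int i - int l))) = 0"
    by (rule sum.neutral) (auto simp: orth_cc)
  finally show ?thesis using norm_cc[OF k] cc_nn[OF k] by simp
qed

lemma aa_swap: "aa k (a - b) = aa k (b - a)"
  using aa_sym[of k "b - a"] by simp

lemma sum_rev_nat: "(\<Sum>i\<le>n. f i) = (\<Sum>i\<le>n. f (n - i))" for f :: "nat \<Rightarrow> 'a::comm_monoid_add"
  by (rule sum.reindex_bij_witness[of _ "\<lambda>i. n - i" "\<lambda>i. n - i"]) auto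

lemma orth_rev:
  assumes l: "l \<le> n" "l \<noteq> 0"
  shows "(\<Sum>i\<le>n. cc k n (n - i) * aa k (int i - int l)) = 0"
proof -
  have "(\<Sum>i\<le>n. cc k n (n - i) * aa k (int i - int l)) = (\<Sum>i\<le>n. cc k n (n - (n - i)) * aa k (int (n - i) - int l))"
    by (rule sum_rev_nat)
  also have "\<dots> = (\<Sum>i\<le>n. cc k n i * aa k (int i - int (n - l)))"
  proof (rule sum.cong)
    fix i assume "i \<in> {..n}"
    then have i: "i \<le> n" by simp
    have e: "int (n - i) - int l = int (n - l) - int i"
      using i l by (simp add: of_nat_diff)
    have "aa k (int (n - i) - int l) = aa k (int i - int (n - l))"
      unfolding e by (rule aa_swap)
    then show "cc k n (n - (n - i)) * aa k (int (n - i) - int l) = cc k n i * aa k (int i - int (n - l))"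
      using i by simp
  qed simp
  also have "\<dots> = 0" by (rule orth_cc) (use l in simp)
  finally show ?thesis .
qed

lemma qf_rev:
  assumes k: "k \<ge> 0"
  shows "(\<Sum>i\<le>n. \<Sum>l\<le>n. cc k n (n - i) * cc k n (n - l) * aa k (int i - int l)) = NV k n"
proof -
  have "(\<Sum>i\<le>n. \<Sum>l\<le>n. cc k n (n - i) * cc k n (n - l) * aa k (int i - int l)) =
     (\<Sum>i\<le>n. \<Sum>l\<le>n. cc k n (n - (n - i)) * cc k n (n - (n - l)) * aa k (int (n - i) - int (n - l)))"
    by (subst sum_rev_nat) (subst (2) sum_rev_nat, rule refl)
  also have "\<dots> = (\<Sum>i\<le>n. \<Sum>l\<le>n. cc k n l * cc k n i * aa k (int l - int i))"
  proof (intro sum.cong refl)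
    fix i l assume "i \<in> {..n}" "l \<in> {..n}"
    then have "i \<le> n" "l \<le> n" by auto
    moreover have e: "int (n - i) - int (n - l) = int l - int i"
      using \<open>i \<le> n\<close> \<open>l \<le> n\<close> by (simp add: of_nat_diff)
    ultimately show "cc k n (n - (n - i)) * cc k n (n - (n - l)) * aa k (int (n - i) - int (n - l)) =
        cc k n l * cc k n i * aa k (int l - int i)" by simp
  qed
  also have "\<dots> = (\<Sum>l\<le>n. \<Sum>i\<le>n. cc k n l * cc k n i * aa k (int l - int i))"
    by (rule sum.swap)
  also have "\<dots> = NV k n" by (rule qf_cc[OF k])
  finally show ?thesis .
qed



lemma exp_mul_cnj:
  "exp (\<i> * of_int a * of_real x) * cnj (exp (\<i> * of_int b * of_real x)) = exp (\<i> * of_int (a - b) * of_real x)"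
proof -
  have "cnj (exp (\<i> * of_int b * of_real x)) = exp (- (\<i> * of_int b * of_real x))"
    by (simp add: exp_cnj)
  then show ?thesis by (simp add: exp_add[symmetric] algebra_simps)
qed

lemma inner_sum:
  assumes k: "k \<ge> 0"
  shows "ho_inner k (\<lambda>x. \<Sum>i\<le>n. d i * exp (\<i> * of_int (2 * int i + s) * of_real x))
           (\<lambda>x. exp (\<i> * of_int (2 * int l + s) * of_real x))
         = (\<Sum>i\<le>n. d i * mom k (2 * (int i - int l))) / (2 * pi)"
proof -
  have pw: "(\<Sum>i\<le>n. d i * exp (\<i> * of_int (2 * int i + s) * of_real x)) * cnj (exp (\<i> * of_int (2 * int l + s) * of_real x))
      * complex_of_real (ho_weight k x)
    = (\<Sum>i\<le>n. d i * (exp (\<i> * of_int (2 * (int i - int l)) * of_real x) * complex_of_real (ho_weight k x)))" for x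
  proof -
    have "(\<Sum>i\<le>n. d i * exp (\<i> * of_int (2 * int i + s) * of_real x)) * cnj (exp (\<i> * of_int (2 * int l + s) * of_real x))
       = (\<Sum>i\<le>n. d i * (exp (\<i> * of_int (2 * int i + s) * of_real x) * cnj (exp (\<i> * of_int (2 * int l + s) * of_real x))))"
      by (simp add: sum_distrib_right mult.assoc)
    also have "\<dots> = (\<Sum>i\<le>n. d i * exp (\<i> * of_int (2 * (int i - int l)) * of_real x))"
      by (simp only: exp_mul_cnj) (simp add: algebra_simps)
    finally show ?thesis by (simp add: sum_distrib_right mult.assoc)
  qed
  have "((\<lambda>x. \<Sum>i\<le>n. d i * (exp (\<i> * of_int (2 * (int i - int l)) * of_real x) * complex_of_real (ho_weight k x)))
      has_integral (\<Sum>i\<le>n. d i * mom k (2 * (int i - int l)))) {0..2*pi}"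
    by (intro has_integral_sum has_integral_mult_right mom_has_integral k) simp
  then have "integral {0..2*pi} (\<lambda>x. (\<Sum>i\<le>n. d i * exp (\<i> * of_int (2 * int i + s) * of_real x)) *
       cnj (exp (\<i> * of_int (2 * int l + s) * of_real x)) * complex_of_real (ho_weight k x))
     = (\<Sum>i\<le>n. d i * mom k (2 * (int i - int l)))"
    unfolding pw by (rule integral_unique)
  then show ?thesis unfolding ho_inner_def by simp
qed

lemma norm_sum:
  assumes k: "k \<ge> 0"
  shows "ho_norm2 k (\<lambda>x. \<Sum>i\<le>n. d i * exp (\<i> * of_int (2 * int i + s) * of_real x))
         = Re (\<Sum>i\<le>n. \<Sum>l\<le>n. d i * cnj (d l) * mom k (2 * (int i - int l))) / (2 * pi)"
proof -
  define F where "F = (\<lambda>x. \<Sum>i\<le>n. d i * exp (\<i> * of_int (2 * int i + s) * of_real x))"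
  define G where "G = (\<lambda>x. \<Sum>i\<le>n. \<Sum>l\<le>n. d i * cnj (d l) *
      (exp (\<i> * of_int (2 * (int i - int l)) * of_real x) * complex_of_real (ho_weight k x)))"
  have pw: "(cmod (F x))^2 * ho_weight k x = Re (G x)" for x
  proof -
    have "F x * cnj (F x) = (\<Sum>i\<le>n. \<Sum>l\<le>n. (d i * exp (\<i> * of_int (2 * int i + s) * of_real x)) *
         cnj (d l * exp (\<i> * of_int (2 * int l + s) * of_real x)))"
      unfolding F_def cnj_sum sum_product ..
    also have "\<dots> = (\<Sum>i\<le>n. \<Sum>l\<le>n. d i * cnj (d l) * exp (\<i> * of_int (2 * (int i - int l)) * of_real x))"
    proof (intro sum.cong refl)
      fix i l
      have "(d i * exp (\<i> * of_int (2 * int i + s) * of_real x)) * cnj (d l * exp (\<i> * of_int (2 * int l + s) * of_real x))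
         = d i * cnj (d l) * (exp (\<i> * of_int (2 * int i + s) * of_real x) * cnj (exp (\<i> * of_int (2 * int l + s) * of_real x)))"
        by (simp add: algebra_simps)
      also have "\<dots> = d i * cnj (d l) * exp (\<i> * of_int (2 * (int i - int l)) * of_real x)"
        by (simp only: exp_mul_cnj) (simp add: algebra_simps)
      finally show "(d i * exp (\<i> * of_int (2 * int i + s) * of_real x)) * cnj (d l * exp (\<i> * of_int (2 * int l + s) * of_real x))
         = d i * cnj (d l) * exp (\<i> * of_int (2 * (int i - int l)) * of_real x)" .
    qed
    finally have FF: "F x * cnj (F x) = (\<Sum>i\<le>n. \<Sum>l\<le>n. d i * cnj (d l) * exp (\<i> * of_int (2 * (int i - int l)) * of_real x))" .
    have "G x = F x * cnj (F x) * complex_of_real (ho_weight k x)"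
      unfolding FF G_def by (simp add: sum_distrib_right mult.assoc)
    also have "F x * cnj (F x) = complex_of_real ((cmod (F x))^2)"
      by (rule complex_norm_square[symmetric])
    finally have "G x = complex_of_real ((cmod (F x))^2 * ho_weight k x)" by simp
    then show ?thesis by simp
  qed
  have hG: "(G has_integral (\<Sum>i\<le>n. \<Sum>l\<le>n. d i * cnj (d l) * mom k (2 * (int i - int l)))) {0..2*pi}"
    unfolding G_def
    by (intro has_integral_sum has_integral_mult_right mom_has_integral k) simp_all
  have "((Re \<circ> G) has_integral Re (\<Sum>i\<le>n. \<Sum>l\<le>n. d i * cnj (d l) * mom k (2 * (int i - int l)))) {0..2*pi}"
    by (rule has_integral_linear[OF hG bounded_linear_Re])
  then have "integral {0..2*pi} (\<lambda>x. (cmod (F x))^2 * ho_weight k x) = Re (\<Sum>i\<le>n. \<Sum>l\<le>n. d i * cnj (d l) * mom k (2 * (int i - int l)))"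
    unfolding pw by (simp add: o_def integral_unique)
  then show ?thesis unfolding ho_norm2_def F_def by simp
qed

lemma aa_zero_k0: "m \<noteq> 0 \<Longrightarrow> aa 0 m = 0"
proof -
  assume m: "m \<noteq> 0"
  show ?thesis
  proof (cases "m > 0")
    case True
    then have "(1::real) - of_int m \<in> \<int>\<^sub>\<le>\<^sub>0"
      by (auto simp: nonpos_Ints_def intro!: exI[of _ "1 - m"])
    then show ?thesis by (simp add: aa_def rGamma_nonpos_Int)
  next
    case False
    with m have "m < 0" by simp
    then have "(1::real) + of_int m \<in> \<int>\<^sub>\<le>\<^sub>0"
      by (auto simp: nonpos_Ints_def intro!: exI[of _ "1 + m"])
    then show ?thesis by (simp add: aa_def rGamma_nonpos_Int)
  qed
qed

lemma M0_pos: "k \<ge> 0 \<Longrightarrow> M0 k > 0"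
proof -
  assume k: "k \<ge> 0"
  then have "Gamma (2 * k + 1) > 0" "Gamma (k + 1) > 0" by auto
  then show ?thesis by (simp add: M0_def)
qed

lemma mom_k0: "mom 0 (2 * m) = (if m = 0 then complex_of_real (2 * pi) else 0)"
  using mom_even[of 0 m] aa_zero_k0[of m] aa0[of 0] by (simp add: M0_def)

lemma weight_nz:
  assumes k: "k \<ge> 0" and x: "x \<in> {0<..<2*pi} - {pi}"
  shows "ho_weight k x \<noteq> 0"
  using sin_nz[OF x] k by (simp add: ho_weight_def)

lemma pos_def:
  assumes k: "k \<ge> 0"
    and z: "(\<Sum>i\<le>n. \<Sum>l\<le>n. d i * cnj (d l) * mom k (2 * (int i - int l))) = 0"
    and l: "l \<le> n"
  shows "d l = 0"
proof -
  define F where "F = (\<lambda>x. \<Sum>i\<le>n. d i * exp (\<i> * of_int (2 * int i + 0) * of_real x))"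
  define \<phi> where "\<phi> = (\<lambda>x. (cmod (F x))^2 * ho_weight k x)"
  have "ho_norm2 k F = 0" unfolding F_def norm_sum[OF k] z by simp
  then have i0: "integral {0..2*pi} \<phi> = 0" by (simp add: ho_norm2_def \<phi>_def)
  have cphi: "continuous_on {0..2*pi} \<phi>" unfolding \<phi>_def F_def
    by (auto intro!: continuous_intros continuous_on_compose2[OF weight_cont[OF k]])
  have hphi: "(\<phi> has_integral 0) {0..2*pi}"
    using integrable_continuous_interval[OF cphi] i0 by (metis integrable_integral)
  have phi0: "\<phi> x = 0" if "x \<in> {0..2*pi}" for x
  proof -
    have "\<not> pi \<le> 0" using pi_gt_zero by linarith
    then have ne: "box (0::real) (2*pi) \<noteq> {}" by simp
    show ?thesis
      by (rule has_integral_0_cbox_imp_0[of 0 "2*pi" \<phi>, OF _ _ _ ne])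
         (use cphi hphi that in \<open>auto simp: \<phi>_def weight_nonneg\<close>)
  qed
  have F0: "F x = 0" if x: "x \<in> {0<..<2*pi} - {pi}" for x
  proof -
    have "\<phi> x = 0" using x by (intro phi0) auto
    then show ?thesis using weight_nz[OF k x] by (simp add: \<phi>_def)
  qed
  have "ho_inner 0 F (\<lambda>x. exp (\<i> * of_int (2 * int l + 0) * of_real x)) = (\<Sum>i\<le>n. d i * mom 0 (2 * (int i - int l))) / (2 * pi)"
    unfolding F_def by (rule inner_sum) simp
  also have "(\<Sum>i\<le>n. d i * mom 0 (2 * (int i - int l))) = d l * complex_of_real (2 * pi)"
  proof -
    have "(\<Sum>i\<le>n. d i * mom 0 (2 * (int i - int l))) = d l * mom 0 (2 * (int l - int l)) +
        (\<Sum>i\<in>{..n} - {l}. d i * mom 0 (2 * (int i - int l)))"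
      using l by (subst sum.remove[of _ l]) auto
    also have "(\<Sum>i\<in>{..n} - {l}. d i * mom 0 (2 * (int i - int l))) = 0"
    proof (rule sum.neutral, rule ballI)
      fix i assume "i \<in> {..n} - {l}"
      then have "int i - int l \<noteq> 0" by auto
      then show "d i * mom 0 (2 * (int i - int l)) = 0" by (simp only: mom_k0 if_False) simp
    qed
    also have "mom 0 (2 * (int l - int l)) = complex_of_real (2 * pi)"
      using mom_k0[of 0] by simp
    finally show ?thesis by simp
  qed
  finally have A: "ho_inner 0 F (\<lambda>x. exp (\<i> * of_int (2 * int l + 0) * of_real x)) = d l"
    by simp
  have "integral {0..2*pi} (\<lambda>x. F x * cnj (exp (\<i> * of_int (2 * int l + 0) * of_real x)) * complex_of_real (ho_weight 0 x))
      = integral {0..2*pi} (\<lambda>x. 0::complex)"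
    by (rule integral_spike[of "{0, pi, 2*pi}"]) (auto simp: F0)
  then have "ho_inner 0 F (\<lambda>x. exp (\<i> * of_int (2 * int l + 0) * of_real x)) = 0"
    unfolding ho_inner_def by simp
  with A show ?thesis by simp
qed



lemma SL1_aux: "ho_less j (int n + 1) \<longleftrightarrow> (\<exists>m::int. 0 \<le> m \<and> m < int n \<and> j = 2 * m + (1 - int n))"
  unfolding ho_less_def by (cases "j \<ge> 0") (auto simp: abs_if; presburger)+

lemma SL2_aux: "ho_less j (- int n) \<longleftrightarrow> (\<exists>m::int. 1 \<le> m \<and> m \<le> int n \<and> j = 2 * m + (- int n))"
  unfolding ho_less_def by (cases "j \<ge> 0") (auto simp: abs_if; presburger)+

lemma SL1: "{j. ho_less j (int n + 1)} = (\<lambda>i. 2 * int i + (1 - int n)) ` ({..n} - {n})"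
proof (intro set_eqI iffI)
  fix j assume "j \<in> {j. ho_less j (int n + 1)}"
  then obtain m :: int where m: "0 \<le> m" "m < int n" "j = 2 * m + (1 - int n)"
    using SL1_aux by auto
  then show "j \<in> (\<lambda>i. 2 * int i + (1 - int n)) ` ({..n} - {n})"
    by (intro image_eqI[of _ _ "nat m"]) auto
next
  fix j assume "j \<in> (\<lambda>i. 2 * int i + (1 - int n)) ` ({..n} - {n})"
  then obtain i where "i \<le> n" "i \<noteq> n" "j = 2 * int i + (1 - int n)" by auto
  then show "j \<in> {j. ho_less j (int n + 1)}"
    unfolding mem_Collect_eq SL1_aux by (intro exI[of _ "int i"]) auto
qed

lemma SL2: "{j. ho_less j (- int n)} = (\<lambda>i. 2 * int i + (- int n)) ` ({..n} - {0})"
proof (intro set_eqI iffI)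
  fix j assume "j \<in> {j. ho_less j (- int n)}"
  then obtain m :: int where m: "1 \<le> m" "m \<le> int n" "j = 2 * m + (- int n)"
    using SL2_aux by auto
  then show "j \<in> (\<lambda>i. 2 * int i + (- int n)) ` ({..n} - {0})"
    by (intro image_eqI[of _ _ "nat m"]) auto
next
  fix j assume "j \<in> (\<lambda>i. 2 * int i + (- int n)) ` ({..n} - {0})"
  then obtain i where "i \<le> n" "i \<noteq> 0" "j = 2 * int i + (- int n)" by auto
  then show "j \<in> {j. ho_less j (- int n)}"
    unfolding mem_Collect_eq SL2_aux by (intro exI[of _ "int i"]) auto
qed

lemma form_sum:
  assumes i0: "i0 \<le> n" and N: "N = 2 * int i0 + s"
    and S: "{j. ho_less j N} = (\<lambda>i. 2 * int i + s) ` ({..n} - {i0})"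
  shows "ho_form N c (\<i> * of_real x) =
    (\<Sum>i\<le>n. (if i = i0 then 1 else c (2 * int i + s)) * exp (\<i> * of_int (2 * int i + s) * of_real x))"
proof -
  have inj: "inj_on (\<lambda>i. 2 * int i + s) ({..n} - {i0})" by (auto simp: inj_on_def)
  have "(\<Sum>j\<in>{j. ho_less j N}. c j * exp (of_int j * (\<i> * of_real x))) =
        (\<Sum>i\<in>{..n} - {i0}. c (2 * int i + s) * exp (of_int (2 * int i + s) * (\<i> * of_real x)))"
    unfolding S by (subst sum.reindex[OF inj]) simp
  also have "\<dots> = (\<Sum>i\<in>{..n} - {i0}. (if i = i0 then 1 else c (2 * int i + s)) * exp (\<i> * of_int (2 * int i + s) * of_real x))"
    by (intro sum.cong refl) (auto simp: mult_ac)
  finally have A: "(\<Sum>j\<in>{j. ho_less j N}. c j * exp (of_int j * (\<i> * of_real x))) =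
       (\<Sum>i\<in>{..n} - {i0}. (if i = i0 then 1 else c (2 * int i + s)) * exp (\<i> * of_int (2 * int i + s) * of_real x))" .
  have "(\<Sum>i\<le>n. (if i = i0 then 1 else c (2 * int i + s)) * exp (\<i> * of_int (2 * int i + s) * of_real x)) =
     exp (\<i> * of_int (2 * int i0 + s) * of_real x) +
     (\<Sum>i\<in>{..n} - {i0}. (if i = i0 then 1 else c (2 * int i + s)) * exp (\<i> * of_int (2 * int i + s) * of_real x))"
    using i0 by (subst sum.remove[of _ i0]) auto
  moreover have "ho_form N c (\<i> * of_real x) = exp (of_int N * (\<i> * of_real x)) +
     (\<Sum>i\<in>{..n} - {i0}. (if i = i0 then 1 else c (2 * int i + s)) * exp (\<i> * of_int (2 * int i + s) * of_real x))"
    unfolding ho_form_def A ..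
  ultimately show ?thesis unfolding N by (simp add: mult_ac)
qed



lemma GT:
  assumes k: "k \<ge> 0" and i0: "i0 \<le> n" and N: "N = 2 * int i0 + s"
    and S: "{j. ho_less j N} = (\<lambda>i. 2 * int i + s) ` ({..n} - {i0})"
    and b0: "b i0 = 1"
    and orth: "\<And>l. l \<le> n \<Longrightarrow> l \<noteq> i0 \<Longrightarrow> (\<Sum>i\<le>n. b i * aa k (int i - int l)) = 0"
  shows "ho_norm2 k (\<lambda>x. HO_E k N (\<i> * of_real x)) =
         M0 k / (2 * pi) * (\<Sum>i\<le>n. \<Sum>l\<le>n. b i * b l * aa k (int i - int l))"
proof -
  define q where "q = (\<lambda>i::nat. 2 * int i + s)"
  define c0 where "c0 = (\<lambda>j. if ho_less j N then complex_of_real (b (nat ((j - s) div 2))) else 0)"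
  define \<beta> where "\<beta> = (\<lambda>(c::int \<Rightarrow> complex) i. if i = i0 then 1 else c (q i))"
  have M0pos: "M0 k > 0" by (rule M0_pos[OF k])
  have qS: "ho_less (q i) N" if "i \<le> n" "i \<noteq> i0" for i
    using that S unfolding q_def by blast
  have Sq: "\<exists>i. i \<le> n \<and> i \<noteq> i0 \<and> j = q i" if "ho_less j N" for j
    using that S unfolding q_def by blast
  have qinv: "nat ((q i - s) div 2) = i" for i by (simp add: q_def)
  have beta0: "\<beta> c0 i = complex_of_real (b i)" if "i \<le> n" for i
    using that qS[of i] b0 by (auto simp: \<beta>_def c0_def qinv)
  have form: "(\<lambda>x. ho_form N c (\<i> * of_real x)) = (\<lambda>x. \<Sum>i\<le>n. \<beta> c i * exp (\<i> * of_int (2 * int i + s) * of_real x))" for c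
    unfolding \<beta>_def q_def by (rule ext, subst form_sum[OF i0 N S]) simp
  have inner: "ho_inner k (\<lambda>x. ho_form N c (\<i> * of_real x)) (\<lambda>x. exp (\<i> * of_int (q l) * of_real x)) =
     complex_of_real (M0 k) / (2 * pi) * (\<Sum>i\<le>n. \<beta> c i * complex_of_real (aa k (int i - int l)))" for c l
  proof -
    have "ho_inner k (\<lambda>x. ho_form N c (\<i> * of_real x)) (\<lambda>x. exp (\<i> * of_int (q l) * of_real x)) =
       (\<Sum>i\<le>n. \<beta> c i * mom k (2 * (int i - int l))) / (2 * pi)"
      unfolding form q_def by (rule inner_sum[OF k])
    also have "\<dots> = (\<Sum>i\<le>n. \<beta> c i * complex_of_real (M0 k * aa k (int i - int l))) / (2 * pi)"
      by (simp only: mom_even[OF k])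
    also have "\<dots> = complex_of_real (M0 k) / (2 * pi) * (\<Sum>i\<le>n. \<beta> c i * complex_of_real (aa k (int i - int l)))"
      by (simp add: sum_distrib_left sum_divide_distrib mult_ac)
    finally show ?thesis .
  qed
  define P where "P = (\<lambda>c. (\<forall>j. \<not> ho_less j N \<longrightarrow> c j = 0) \<and>
      (\<forall>j. ho_less j N \<longrightarrow>
         ho_inner k (\<lambda>x. ho_form N c (\<i> * of_real x)) (\<lambda>x. exp (\<i> * of_int j * of_real x)) = 0))"
  have Pc0: "P c0"
    unfolding P_def
  proof (intro conjI allI impI)
    fix j assume "\<not> ho_less j N" then show "c0 j = 0" by (simp add: c0_def)
  next
    fix j assume "ho_less j N"
    then obtain l where l: "l \<le> n" "l \<noteq> i0" "j = q l" using Sq by blast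
    have "(\<Sum>i\<le>n. \<beta> c0 i * complex_of_real (aa k (int i - int l))) =
          complex_of_real (\<Sum>i\<le>n. b i * aa k (int i - int l))"
      by (simp add: beta0)
    also have "\<dots> = 0" using orth[OF l(1,2)] by simp
    finally show "ho_inner k (\<lambda>x. ho_form N c0 (\<i> * of_real x)) (\<lambda>x. exp (\<i> * of_int j * of_real x)) = 0"
      unfolding l(3) inner by simp
  qed
  have uniq: "c = c0" if Pc: "P c" for c
  proof -
    define d where "d = (\<lambda>i. \<beta> c i - complex_of_real (b i))"
    have d0: "d i0 = 0" by (simp add: d_def \<beta>_def b0)
    have od: "(\<Sum>i\<le>n. d i * complex_of_real (aa k (int i - int l))) = 0" if l: "l \<le> n" and False: "l \<noteq> i0" for l
    proof -
      have "ho_less (q l) N" using qS[OF l False] .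
      then have "ho_inner k (\<lambda>x. ho_form N c (\<i> * of_real x)) (\<lambda>x. exp (\<i> * of_int (q l) * of_real x)) = 0"
        using Pc unfolding P_def by blast
      then have "complex_of_real (M0 k) / (2 * pi) * (\<Sum>i\<le>n. \<beta> c i * complex_of_real (aa k (int i - int l))) = 0"
        unfolding inner .
      then have A: "(\<Sum>i\<le>n. \<beta> c i * complex_of_real (aa k (int i - int l))) = 0"
        using M0pos by simp
      have B: "(\<Sum>i\<le>n. complex_of_real (b i) * complex_of_real (aa k (int i - int l))) = 0"
        using orth[OF l False] by (simp flip: of_real_mult of_real_sum)
      show ?thesis using A B by (simp add: d_def algebra_simps sum_subtractf)
    qed
    have qf: "(\<Sum>i\<le>n. \<Sum>l\<le>n. d i * cnj (d l) * mom k (2 * (int i - int l))) = 0"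
    proof -
      have "(\<Sum>i\<le>n. \<Sum>l\<le>n. d i * cnj (d l) * mom k (2 * (int i - int l))) =
            (\<Sum>l\<le>n. \<Sum>i\<le>n. d i * cnj (d l) * mom k (2 * (int i - int l)))"
        by (rule sum.swap)
      also have "\<dots> = (\<Sum>l\<le>n. \<Sum>i\<le>n. d i * cnj (d l) * complex_of_real (M0 k * aa k (int i - int l)))"
        by (simp only: mom_even[OF k])
      also have "\<dots> = (\<Sum>l\<le>n. cnj (d l) * complex_of_real (M0 k) * (\<Sum>i\<le>n. d i * complex_of_real (aa k (int i - int l))))"
        by (simp add: sum_distrib_left mult_ac)
      also have "\<dots> = 0"
      proof (rule sum.neutral, rule ballI)
        fix l assume "l \<in> {..n}"
        then show "cnj (d l) * complex_of_real (M0 k) * (\<Sum>i\<le>n. d i * complex_of_real (aa k (int i - int l))) = 0"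
          using od[of l] d0 by (cases "l = i0") auto
      qed
      finally show ?thesis .
    qed
    have dz: "d l = 0" if "l \<le> n" for l
      by (rule pos_def[OF k qf that])
    show ?thesis
    proof (rule ext)
      fix j show "c j = c0 j"
      proof (cases "ho_less j N")
        case True
        then obtain l where l: "l \<le> n" "l \<noteq> i0" "j = q l" using Sq by blast
        have "\<beta> c l = complex_of_real (b l)" using dz[OF l(1)] by (simp add: d_def)
        also have "\<dots> = \<beta> c0 l" using beta0[OF l(1)] by simp
        finally show ?thesis using l by (simp add: \<beta>_def)
      next
        case False
        then show ?thesis using Pc by (simp add: P_def c0_def)
      qed
    qed
  qed
  have coeffs: "ho_coeffs k N = c0"
  proof -
    have "ho_coeffs k N = (THE c. P c)" by (simp add: ho_coeffs_def P_def)
    also have "\<dots> = c0" by (rule the_equality[of P c0, OF Pc0 uniq])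
    finally show ?thesis .
  qed
  have E: "(\<lambda>x. HO_E k N (\<i> * of_real x)) = (\<lambda>x. \<Sum>i\<le>n. complex_of_real (b i) * exp (\<i> * of_int (2 * int i + s) * of_real x))"
  proof -
    have "(\<lambda>x. HO_E k N (\<i> * of_real x)) = (\<lambda>x. \<Sum>i\<le>n. \<beta> c0 i * exp (\<i> * of_int (2 * int i + s) * of_real x))"
      unfolding HO_E_def coeffs form ..
    also have "\<dots> = (\<lambda>x. \<Sum>i\<le>n. complex_of_real (b i) * exp (\<i> * of_int (2 * int i + s) * of_real x))"
      by (intro ext sum.cong refl) (simp add: beta0)
    finally show ?thesis .
  qed
  have "(\<Sum>i\<le>n. \<Sum>l\<le>n. complex_of_real (b i) * cnj (complex_of_real (b l)) * mom k (2 * (int i - int l))) =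
        complex_of_real (\<Sum>i\<le>n. \<Sum>l\<le>n. M0 k * (b i * b l * aa k (int i - int l)))"
    by (simp only: mom_even[OF k]) (simp add: mult_ac)
  then show ?thesis
    unfolding E norm_sum[OF k] by (simp add: sum_distrib_left sum_divide_distrib)
qed



lemma final_value:
  assumes k: "k \<ge> 0"
  shows "M0 k / (2 * pi) * NV k n = fact n * Gamma (real n + 2 * k + 1) / (Gamma (real n + k + 1))\<^sup>2"
proof -
  have n1: "2 * k + 1 \<notin> \<int>\<^sub>\<le>\<^sub>0" "k + 1 \<notin> \<int>\<^sub>\<le>\<^sub>0" using k by (auto dest: nonpos_Ints_nonpos)
  have p1: "pochhammer (2 * k + 1) n = Gamma (real n + 2 * k + 1) / Gamma (2 * k + 1)"
    using pochhammer_Gamma[OF n1(1), of n] by (simp add: algebra_simps)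
  have p2: "pochhammer (k + 1) n = Gamma (real n + k + 1) / Gamma (k + 1)"
    using pochhammer_Gamma[OF n1(2), of n] by (simp add: algebra_simps)
  have g: "Gamma (2 * k + 1) > 0" "Gamma (k + 1) > 0" "Gamma (real n + k + 1) > 0" using k by auto
  show ?thesis unfolding M0_def NV_def p1 p2 using g pi_gt_zero
    by (simp add: field_simps power2_eq_square)
qed

theorem mainTheorem5:
  fixes k :: real and n :: nat
  assumes "k \<ge> 0"
  shows "ho_norm2 k (\<lambda>x. HO_E k (int n + 1) (\<i> * of_real x))
           = fact n * Gamma (real n + 2 * k + 1) / (Gamma (real n + k + 1))\<^sup>2
       \<and> ho_norm2 k (\<lambda>x. HO_E k (- int n) (\<i> * of_real x))
           = fact n * Gamma (real n + 2 * k + 1) / (Gamma (real n + k + 1))\<^sup>2"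
proof
  have "ho_norm2 k (\<lambda>x. HO_E k (int n + 1) (\<i> * of_real x)) =
        M0 k / (2 * pi) * (\<Sum>i\<le>n. \<Sum>l\<le>n. cc k n i * cc k n l * aa k (int i - int l))"
  proof (rule GT[OF assms, of n n "int n + 1" "1 - int n"])
    show "{j. ho_less j (int n + 1)} = (\<lambda>i. 2 * int i + (1 - int n)) ` ({..n} - {n})" by (rule SL1)
    show "cc k n n = 1" by (rule cc_nn[OF assms])
    fix l assume "l \<le> n" "l \<noteq> n"
    then show "(\<Sum>i\<le>n. cc k n i * aa k (int i - int l)) = 0" by (intro orth_cc) simp
  qed simp_all
  also have "\<dots> = fact n * Gamma (real n + 2 * k + 1) / (Gamma (real n + k + 1))\<^sup>2"
    unfolding qf_cc[OF assms] by (rule final_value[OF assms])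
  finally show "ho_norm2 k (\<lambda>x. HO_E k (int n + 1) (\<i> * of_real x))
           = fact n * Gamma (real n + 2 * k + 1) / (Gamma (real n + k + 1))\<^sup>2" .
next
  have "ho_norm2 k (\<lambda>x. HO_E k (- int n) (\<i> * of_real x)) =
        M0 k / (2 * pi) * (\<Sum>i\<le>n. \<Sum>l\<le>n. cc k n (n - i) * cc k n (n - l) * aa k (int i - int l))"
  proof (rule GT[OF assms, of 0 n "- int n" "- int n" "\<lambda>i. cc k n (n - i)"])
    show "{j. ho_less j (- int n)} = (\<lambda>i. 2 * int i + (- int n)) ` ({..n} - {0})" by (rule SL2)
    show "cc k n (n - 0) = 1" using cc_nn[OF assms] by simp
    fix l assume "l \<le> n" "l \<noteq> 0"
    then show "(\<Sum>i\<le>n. cc k n (n - i) * aa k (int i - int l)) = 0" by (rule orth_rev)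
  qed simp_all
  also have "\<dots> = fact n * Gamma (real n + 2 * k + 1) / (Gamma (real n + k + 1))\<^sup>2"
    unfolding qf_rev[OF assms] by (rule final_value[OF assms])
  finally show "ho_norm2 k (\<lambda>x. HO_E k (- int n) (\<i> * of_real x))
           = fact n * Gamma (real n + 2 * k + 1) / (Gamma (real n + k + 1))\<^sup>2" .
qed

end
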